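(* Let $n,k,d,d_p$ be positive integers with $d_p\ge n$, and let $\mathbf{P}\in\mathbb{R}^{n\times d_p}$ have orthonormal rows $\mathbf{P}_1,\dots,\mathbf{P}_n$. Let $\mu$ be any order-$2k$ equivalence class, i.e. $\mu\in[n]^{2k}/_\sim$, with basis tensor $\mathbf{B}^\mu\in\mathbb{R}^{n^{2k}}$, regarded as an $n^k\times n^k$ matrix $\mathbf{B}^\mu_{\mathbf{i},\mathbf{j}}$ indexed by $\mathbf{i},\mathbf{j}\in[n]^k$. Then for every $\delta>0$ there exist a type identifier dimension $d_e$, type identifiers $\mathbf{E}^{\gamma}\in\mathbb{R}^{d_e}$ (one for each order-$k$ equivalence class $\gamma$), a hidden dimension $d_{\mathcal{T}}$, an input projection $w^{in}\in\mathbb{R}^{(d+kd_p+d_e)\times d_{\mathcal{T}}}$, a head dimension $d_H$, and query/key parameters $w^Q,w^K\in\mathbb{R}^{d_{\mathcal{T}}\times d_H}$, $b^Q,b^K\in\mathbb{R}^{d_H}$ such that for every $\mathbf{X}\in\mathbb{R}^{n^k\times d}$ the self-attention coefficients $\boldsymbol{\alpha}$ computed from $\mathbf{Z}=\mathbf{X}^{in}w^{in}$ satisfy $$\Big|\boldsymbol{\alpha}_{\mathbf{i},\mathbf{j}}-\frac{\mathbf{B}^\mu_{\mathbf{i},\mathbf{j}}}{\sum_{\mathbf{j}'\in[n]^k}\mathbf{B}^\mu_{\mathbf{i},\mathbf{j}'}}\Big|<\delta$$ for all $\mathbf{i},\mathbf{j}\in[n]^k$ such that $\sum_{\mathbf{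j}'}\mathbf{B}^\mu_{\mathbf{i},\mathbf{j}'}>0$.
   Context: For $l\ge1$, the equivalence relation $\sim$ on $[n]^l$ relates $\mathbf{i}\sim\mathbf{j}$ iff $(i_1,\dots,i_l)=(\pi(j_1),\dots,\pi(j_l))$ for some permutation $\pi\in S_n$; an order-$l$ equivalence class is an element of $[n]^l/_\sim$ (equivalently, the set of all multi-indices with a given equality pattern among their entries). The basis tensor of an order-$l$ class $\gamma$ is $\mathbf{B}^\gamma\in\mathbb{R}^{n^l}$ with $\mathbf{B}^\gamma_{\mathbf{i}}=1$ if $\mathbf{i}\in\gamma$ and $0$ otherwise; for an order-$2k$ class $\mu$ we write $\mathbf{B}^\mu_{\mathbf{i},\mathbf{j}}$ for the entry at the concatenated index $(\mathbf{i},\mathbf{j})$. Augmentation: given $\mathbf{X}\in\mathbb{R}^{n^k\times d}$ (rows $\mathbf{X}_{\mathbf{i}}$ indexed by $\mathbf{i}=(i_1,\dots,i_k)\in[n]^k$), node identifiers $\mathbf{P}$ and type identifiers $\mathbf{E}^\gamma$, the augmented tensor $\mathbf{X}^{in}\in\mathbb{R}^{n^k\times(d+kd_p+d_e)}$ has rows $\mathbf{X}^{in}_{\mathbf{i}}=[\mathbf{X}_{\mathbf{i}},\mathbf{P}_{i_1},\dots,\mathbf{P}_{i_k},\mathbf{E}^{\gamma}]$ where $\gamma$ is the order-$k$ class containing $\mathbf{i}$. A self-attention head on $\mathbf{Z}\in\mathbb{R}^{n^k\times d_{\mathcal{T}}}$ has coefficients $\boldsymbol{\alpha}=\mathrm{softmax}\big((\mathbf{Z}w^Q+\mathbf{1}(b^Q)^\top)(\mathbf{Z}w^K+\mathbf{1}(b^K)^\top)^\top/\sqrt{d_H}\big)$,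 with softmax taken over each row (over keys $\mathbf{j}\in[n]^k$). *)

theory Defs
  imports Complex_Main "HOL-Combinatorics.Permutations"
begin

definition idx :: "nat \<Rightarrow> nat \<Rightarrow> nat list set" where
  "idx n l = {xs. length xs = l \<and> set xs \<subseteq> {..<n}}"

definition idx_rel :: "nat \<Rightarrow> nat \<Rightarrow> (nat list \<times> nat list) set" where
  "idx_rel n l = {(i, j). i \<in> idx n l \<and> j \<in> idx n l \<and>
                          (\<exists>\<pi>. \<pi> permutes {..<n} \<and> i = map \<pi> j)}"

definition eq_classes :: "nat \<Rightarrow> nat \<Rightarrow> nat list set set" where
  "eq_classes n l = idx n l // idx_rel n l"

definition basis :: "nat list set \<Rightarrow> nat list \<Rightarrow> real" where
  "basis \<gamma> i = (if i \<in> \<gamma> then 1 else 0)"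

definition class_of :: "nat \<Rightarrow> nat \<Rightarrow> nat list \<Rightarrow> nat list set" where
  "class_of n k i = idx_rel n k `` {i}"

text \<open>Augmented input: row i is [X_i, P_{i_1}, ..., P_{i_k}, E^gamma], of width d + k*dp + de.
  Feature vectors are functions nat => real, meaningful on indices below the width.\<close>
definition augment ::
  "nat \<Rightarrow> nat \<Rightarrow> nat \<Rightarrow> nat \<Rightarrow> (nat list \<Rightarrow> nat \<Rightarrow> real) \<Rightarrow> (nat \<Rightarrow> nat \<Rightarrow> real)
    \<Rightarrow> (nat list set \<Rightarrow> nat \<Rightarrow> real) \<Rightarrow> nat list \<Rightarrow> nat \<Rightarrow> real" where
  "augment n k d dp X P E i f =
     (if f < d then X i f
      else if f < d + k * dp then P (i ! ((f - d) div dp)) ((f - d) mod dp)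
      else E (class_of n k i) (f - d - k * dp))"

definition attn_coeff ::
  "nat \<Rightarrow> nat \<Rightarrow> nat \<Rightarrow> nat \<Rightarrow> (nat list \<Rightarrow> nat \<Rightarrow> real)
    \<Rightarrow> (nat \<Rightarrow> nat \<Rightarrow> real) \<Rightarrow> (nat \<Rightarrow> nat \<Rightarrow> real) \<Rightarrow> (nat \<Rightarrow> real) \<Rightarrow> (nat \<Rightarrow> real)
    \<Rightarrow> nat list \<Rightarrow> nat list \<Rightarrow> real" where
  "attn_coeff n k dT dH Z wQ wK bQ bK i j =
     (let Q = (\<lambda>r h. (\<Sum>t<dT. Z r t * wQ t h) + bQ h);
          K = (\<lambda>r h. (\<Sum>t<dT. Z r t * wK t h) + bK h);
          S = (\<lambda>r s. (\<Sum>h<dH. Q r h * K s h) / sqrt (real dH))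
      in exp (S i j) / (\<Sum>j'\<in>idx n k. exp (S i j')))"

definition proj :: "nat \<Rightarrow> (nat list \<Rightarrow> nat \<Rightarrow> real) \<Rightarrow> (nat \<Rightarrow> nat \<Rightarrow> real) \<Rightarrow> nat list \<Rightarrow> nat \<Rightarrow> real" where
  "proj D Xin win i t = (\<Sum>f<D. Xin i f * win f t)"

end

theory Submission
  imports Defs
begin


lemma sum_split_add: "(\<Sum>a<k+l. f a) = (\<Sum>a<k. f a) + (\<Sum>a<l. f (k+a::nat)) "
  by (induction l) (simp_all add: add_ac)

lemma sum_split_mult: "(\<Sum>h<m*p. F h) = (\<Sum>a<m. \<Sum>r<p. F (a*p + r::nat))"
proof -
  have "(\<Sum>h<m*p. F h) = (\<Sum>a<m. sum F {a*p..<a*p+p})"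
    using sum.nat_group[of F p m] by simp
  also have "\<dots> = (\<Sum>a<m. \<Sum>r<p. F (a*p + r))"
  proof (rule sum.cong[OF refl])
    fix a
    have "sum F {0+a*p..<p+a*p} = (\<Sum>r\<in>{0..<p}. F (r + a*p))"
      by (rule sum.shift_bounds_nat_ivl)
    then show "sum F {a*p..<a*p+p} = (\<Sum>r<p. F (a*p + r))"
      by (simp add: add.commute atLeast0LessThan)
  qed
  finally show ?thesis .
qed

lemma sum_le_minus1:
  fixes f g :: "'a \<Rightarrow> real"
  assumes "finite A" "\<And>a. a\<in>A \<Longrightarrow> f a \<le> g a" "z \<in> A" "f z \<le> g z - 1"
  shows "sum f A \<le> sum g A - 1"
proof -
  have "sum f A = f z + sum f (A - {z})" using assms by (simp add: sum.remove)
  moreover have "sum g A = g z + sum g (A - {z})" using assms by (simp add: sum.remove)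
  moreover have "sum f (A - {z}) \<le> sum g (A - {z})" using assms by (intro sum_mono) auto
  ultimately show ?thesis using assms by linarith
qed

definition sg :: "bool \<Rightarrow> real" where "sg p = (if p then 1 else -1)"
definition ind :: "bool \<Rightarrow> real" where "ind q = (if q then 1 else 0)"
definition Tp :: "nat list \<Rightarrow> nat \<Rightarrow> nat list \<Rightarrow> real" where
  "Tp m L x = (\<Sum>a<L. \<Sum>b<L. sg (m!a = m!b) * ind (x!a = x!b))"

lemma Tp_le: "Tp m L x \<le> Tp m L m"
  unfolding Tp_def by (intro sum_mono) (auto simp: sg_def ind_def)

lemma Tp_lt:
  assumes "a0 < L" "b0 < L" "(m!a0 = m!b0) \<noteq> (x!a0 = x!b0)"
  shows "Tp m L x \<le> Tp m L m - 1"
  unfolding Tp_def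
proof (rule sum_le_minus1[where z=a0])
  show "(\<Sum>b<L. sg (m ! a = m ! b) * ind (x ! a = x ! b)) \<le> (\<Sum>b<L. sg (m ! a = m ! b) * ind (m ! a = m ! b))" for a
    by (intro sum_mono) (auto simp: sg_def ind_def)
  show "(\<Sum>b<L. sg (m ! a0 = m ! b) * ind (x ! a0 = x ! b)) \<le> (\<Sum>b<L. sg (m ! a0 = m ! b) * ind (m ! a0 = m ! b)) - 1"
    by (rule sum_le_minus1[where z=b0]) (use assms in \<open>auto simp: sg_def ind_def\<close>)
qed (use assms in auto)

lemma Tp_eq:
  assumes "\<forall>a<L. \<forall>b<L. (m!a = m!b) = (x!a = x!b)"
  shows "Tp m L x = Tp m L m"
  unfolding Tp_def using assms by (intro sum.cong refl) auto

lemma rel_pattern: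
  assumes "\<pi> permutes S" "m = map \<pi> x" "a < length x" "b < length x"
  shows "(m!a = m!b) = (x!a = x!b)"
proof -
  have "m!a = \<pi> (x!a)" "m!b = \<pi> (x!b)" using assms by auto
  then show ?thesis using permutes_inj[OF assms(1)] by (metis injD)
qed

lemma same_pattern_rel:
  assumes x: "x \<in> idx n L" and m: "m \<in> idx n L"
    and pat: "\<forall>a<L. \<forall>b<L. (m!a = m!b) = (x!a = x!b)"
  shows "\<exists>\<pi>. \<pi> permutes {..<n} \<and> m = map \<pi> x"
proof -
  have lx: "length x = L" and sx: "set x \<subseteq> {..<n}" using x by (auto simp: idx_def)
  have lm: "length m = L" and sm: "set m \<subseteq> {..<n}" using m by (auto simp: idx_def)
  define f where "f z = m ! (LEAST a. a < L \<and> x!a = z)" for z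
  have fx: "f (x!a) = m!a" if "a < L" for a
  proof -
    let ?a0 = "LEAST a'. a' < L \<and> x!a' = x!a"
    have "?a0 < L \<and> x!?a0 = x!a" by (rule LeastI[of _ a]) (use that in auto)
    then show ?thesis using pat that unfolding f_def by metis
  qed
  have bf: "bij_betw f (set x) (set m)"
  proof (rule bij_betwI')
    fix z1 z2 assume "z1 \<in> set x" "z2 \<in> set x"
    then obtain a1 a2 where "a1 < L" "a2 < L" "z1 = x!a1" "z2 = x!a2"
      using lx by (auto simp: in_set_conv_nth)
    then show "(f z1 = f z2) = (z1 = z2)" using fx pat by auto
  next
    fix z assume "z \<in> set x"
    then obtain a where "a < L" "z = x!a" using lx by (auto simp: in_set_conv_nth)
    then show "f z \<in> set m" using fx lm by auto
  next
    fix y assume "y \<in> set m"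
    then obtain a where "a < L" "y = m!a" using lm by (auto simp: in_set_conv_nth)
    then show "\<exists>z\<in>set x. y = f z" using fx lx by (metis nth_mem)
  qed
  have "card (set x) = card (set m)" using bij_betw_same_card[OF bf] .
  then have "card ({..<n} - set x) = card ({..<n} - set m)"
    using sx sm by (simp add: card_Diff_subset)
  then obtain g where bg: "bij_betw g ({..<n} - set x) ({..<n} - set m)"
    using finite_same_card_bij by blast
  define \<pi> where "\<pi> z = (if z \<in> set x then f z else if z < n then g z else z)" for z
  have b1: "bij_betw \<pi> (set x) (set m)"
    using bf by (rule bij_betw_cong[THEN iffD1, rotated]) (auto simp: \<pi>_def)
  have b2: "bij_betw \<pi> ({..<n} - set x) ({..<n} - set m)"
    using bg by (rule bij_betw_cong[THEN iffD1, rotated]) (auto simp: \<pi>_def)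
  have "bij_betw \<pi> (set x \<union> ({..<n} - set x)) (set m \<union> ({..<n} - set m))"
    by (rule bij_betw_combine[OF b1 b2]) auto
  moreover have "set x \<union> ({..<n} - set x) = {..<n}" "set m \<union> ({..<n} - set m) = {..<n}"
    using sx sm by auto
  ultimately have "bij_betw \<pi> {..<n} {..<n}" by simp
  then have "\<pi> permutes {..<n}"
    by (rule bij_imp_permutes) (use sx in \<open>auto simp: \<pi>_def\<close>)
  moreover have "m = map \<pi> x"
    by (rule nth_equalityI) (auto simp: lx lm \<pi>_def fx)
  ultimately show ?thesis by blast
qed

lemma mu_rep:
  assumes "\<mu> \<in> eq_classes n L"
  obtains m where "m \<in> idx n L" "\<mu> = idx_rel n L `` {m}"
  using assms unfolding eq_classes_def quotient_def by blast

lemma mem_mu: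
  assumes "m \<in> idx n L" "x \<in> idx n L"
  shows "(x \<in> idx_rel n L `` {m}) = (\<forall>a<L. \<forall>b<L. (m!a = m!b) = (x!a = x!b))"
proof
  assume "x \<in> idx_rel n L `` {m}"
  then obtain \<pi> where "\<pi> permutes {..<n}" "m = map \<pi> x" by (auto simp: idx_rel_def)
  then show "\<forall>a<L. \<forall>b<L. (m!a = m!b) = (x!a = x!b)"
    using rel_pattern[of \<pi> "{..<n}" m x] assms(2) by (auto simp: idx_def)
next
  assume "\<forall>a<L. \<forall>b<L. (m!a = m!b) = (x!a = x!b)"
  then show "x \<in> idx_rel n L `` {m}"
    using same_pattern_rel[OF assms(2,1)] assms by (auto simp: idx_rel_def)
qed

lemma Tp_mu:
  assumes "m \<in> idx n L" "x \<in> idx n L"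
  shows "x \<in> idx_rel n L `` {m} \<Longrightarrow> Tp m L x = Tp m L m"
    and "x \<notin> idx_rel n L `` {m} \<Longrightarrow> Tp m L x \<le> Tp m L m - 1"
  using mem_mu[OF assms] Tp_eq Tp_lt by blast+



definition Am :: "nat list \<Rightarrow> nat \<Rightarrow> nat list \<Rightarrow> real" where
  "Am m k i = (\<Sum>a<k. \<Sum>b<k. sg (m!a = m!b) * ind (i!a = i!b))"
definition Gm :: "nat list \<Rightarrow> nat \<Rightarrow> nat list \<Rightarrow> real" where
  "Gm m k j = (\<Sum>a<k. \<Sum>b<k. sg (m!(k+a) = m!(k+b)) * ind (j!a = j!b))"
definition Wm :: "nat list \<Rightarrow> nat \<Rightarrow> nat \<Rightarrow> nat \<Rightarrow> real" where
  "Wm m k a b = 2 * sg (m!a = m!(k+b))"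
definition Bm :: "nat list \<Rightarrow> nat \<Rightarrow> nat list \<Rightarrow> nat list \<Rightarrow> real" where
  "Bm m k i j = (\<Sum>a<k. \<Sum>b<k. Wm m k a b * ind (i!a = j!b))"

lemma Tp_split:
  assumes "length i = k" "length j = k"
  shows "Tp m (2*k) (i@j) = Am m k i + Bm m k i j + Gm m k j"
proof -
  have "Tp m (2*k) (i@j) =
     (\<Sum>a<k. \<Sum>b<k. sg (m!a = m!b) * ind (i!a = i!b)) +
     (\<Sum>a<k. \<Sum>b<k. sg (m!a = m!(k+b)) * ind (i!a = j!b)) +
     ((\<Sum>a<k. \<Sum>b<k. sg (m!(k+a) = m!b) * ind (j!a = i!b)) +
     (\<Sum>a<k. \<Sum>b<k. sg (m!(k+a) = m!(k+b)) * ind (j!a = j!b)))"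
    unfolding Tp_def mult_2 sum_split_add using assms
    by (simp add: nth_append sum.distrib)
  moreover have "(\<Sum>a<k. \<Sum>b<k. sg (m!(k+a) = m!b) * ind (j!a = i!b)) =
      (\<Sum>a<k. \<Sum>b<k. sg (m!a = m!(k+b)) * ind (i!a = j!b))"
    by (subst sum.swap) (simp add: eq_commute)
  moreover have "Bm m k i j = 2 * (\<Sum>a<k. \<Sum>b<k. sg (m!a = m!(k+b)) * ind (i!a = j!b))"
    unfolding Bm_def Wm_def by (simp add: sum_distrib_left mult.assoc)
  ultimately show ?thesis
    unfolding Am_def Gm_def by linarith
qed

lemma softmax_approx:
  fixes sc :: "'a \<Rightarrow> real"
  assumes fin: "finite I" and gI: "good \<subseteq> I" and gne: "good \<noteq> {}"
    and small: "real (card I) * exp (- lam) < \<delta>"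
    and sg: "\<And>j. j \<in> good \<Longrightarrow> sc j = cz"
    and sb: "\<And>j. j \<in> I - good \<Longrightarrow> sc j \<le> cz - lam"
    and j: "j \<in> I"
  shows "\<bar>exp (sc j) / (\<Sum>j'\<in>I. exp (sc j')) - (if j \<in> good then 1 else 0) / real (card good)\<bar> < \<delta>"
proof -
  define e where "e j = exp (sc j - cz)" for j
  have ee: "exp (sc j) = exp cz * e j" for j by (simp add: e_def exp_diff)
  have fg: "finite good" using fin gI finite_subset by blast
  define N where "N = real (card good)"
  have N1: "N \<ge> 1" using fg gne by (simp add: N_def Suc_le_eq card_gt_0_iff)
  define R where "R = (\<Sum>j'\<in>I - good. e j')"
  have R0: "R \<ge> 0" unfolding R_def e_def by (intro sum_nonneg) auto
  have ebad: "e j' \<le> exp (- lam)" if "j' \<in> I - good" for j'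
    using sb[OF that] unfolding e_def by simp
  have "R \<le> (\<Sum>j'\<in>I - good. exp (- lam))" unfolding R_def by (intro sum_mono ebad)
  also have "\<dots> = real (card (I - good)) * exp (- lam)" by simp
  also have "\<dots> \<le> real (card I) * exp (- lam)"
    using fin by (intro mult_right_mono) (auto intro: card_mono)
  finally have Rs: "R < \<delta>" using small by linarith
  have I1: "real (card I) \<ge> 1" using fin gI gne card_mono[OF fin gI] N1 N_def by linarith
  have "(\<Sum>j'\<in>I. e j') = (\<Sum>j'\<in>good. e j') + R"
    unfolding R_def using fin gI by (metis sum.subset_diff add.commute)
  also have "(\<Sum>j'\<in>good. e j') = N" unfolding N_def e_def using sg by simp
  finally have S: "(\<Sum>j'\<in>I. e j') = N + R" .
  have "exp (sc j) / (\<Sum>j'\<in>I. exp (sc j')) = e j / (N + R)"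
    unfolding ee by (simp add: sum_distrib_left[symmetric] S)
  moreover have "\<bar>e j / (N + R) - (if j \<in> good then 1 else 0) / N\<bar> < \<delta>"
  proof (cases "j \<in> good")
    case True
    then have "e j = 1" using sg by (simp add: e_def)
    then have "\<bar>e j / (N + R) - (if j \<in> good then 1 else 0) / N\<bar> = R / (N * (N + R))"
      using True N1 R0 by (simp add: field_simps)
    also have "\<dots> \<le> R / 1"
    proof (rule divide_left_mono)
      show "1 \<le> N * (N + R)" using mult_mono[of 1 N 1 "N+R"] N1 R0 by simp
      then show "0 < N * (N + R) * 1" by simp
    qed (use R0 in auto)
    finally show ?thesis using Rs by simp
  next
    case False
    then have "e j \<le> exp (- lam)" using ebad j by blast
    moreover have "e j > 0" by (simp add: e_def)
    moreover have "e j / (N + R) \<le> e j / 1" using N1 R0 \<open>e j > 0\<close>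
      by (intro divide_left_mono) auto
    moreover have "exp (- lam) \<le> real (card I) * exp (- lam)" using I1 by simp
    moreover have "\<bar>e j / (N + R) - (if j \<in> good then 1 else 0) / N\<bar> = e j / (N + R)"
      using False N1 R0 \<open>e j > 0\<close> by simp
    ultimately show ?thesis using small by linarith
  qed
  ultimately show ?thesis by (simp add: N_def)
qed



lemma lt_mix: "b < k \<Longrightarrow> c < (dp::nat) \<Longrightarrow> b*dp + c < k*dp"
proof -
  assume "b < k" "c < dp"
  then have "b*dp + c < b*dp + dp" by simp
  also have "\<dots> = Suc b * dp" by simp
  also have "\<dots> \<le> k * dp" using \<open>b<k\<close> by (intro mult_le_mono1) simp
  finally show ?thesis .
qed

lemma dec1: "r < (p::nat) \<Longrightarrow> (a*p + r) div p = a"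
  by (simp add: add.commute)
lemma dec2: "r < (p::nat) \<Longrightarrow> (a*p + r) mod p = r"
  by (simp add: add.commute)

definition hA :: "nat \<Rightarrow> nat \<Rightarrow> nat \<Rightarrow> nat" where "hA k dp h = h div (k*dp)"
definition hB :: "nat \<Rightarrow> nat \<Rightarrow> nat \<Rightarrow> nat" where "hB k dp h = (h mod (k*dp)) div dp"
definition hC :: "nat \<Rightarrow> nat \<Rightarrow> nat" where "hC dp h = h mod dp"

lemma dec_all:
  assumes "b < k" "c < dp"
  shows "hA k dp (a*(k*dp) + (b*dp+c)) = a" "hB k dp (a*(k*dp) + (b*dp+c)) = b"
    "hC dp (a*(k*dp) + (b*dp+c)) = c"
proof -
  have l: "b*dp + c < k*dp" using lt_mix assms .
  show "hA k dp (a*(k*dp) + (b*dp+c)) = a" unfolding hA_def using dec1[OF l] .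
  show "hB k dp (a*(k*dp) + (b*dp+c)) = b" unfolding hB_def using dec2[OF l] dec1[OF assms(2)] by simp
  have e: "a*(k*dp) + (b*dp+c) = (a*k + b)*dp + c" by (simp add: algebra_simps)
  show "hC dp (a*(k*dp) + (b*dp+c)) = c" unfolding hC_def e by (rule dec2[OF assms(2)])
qed

lemma hbounds:
  assumes "h < k*(k*dp)"
  shows "hA k dp h < k" "hB k dp h < k" "hC dp h < dp"
proof -
  have kdp: "k*dp > 0" using assms by (cases "k*dp = 0") auto
  show "hA k dp h < k" unfolding hA_def using assms by (simp add: less_mult_imp_div_less)
  have "h mod (k*dp) < k*dp" using kdp by simp
  then show "hB k dp h < k" unfolding hB_def by (simp add: less_mult_imp_div_less)
  show "hC dp h < dp" unfolding hC_def using kdp by simp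
qed

lemma sum_delta_mult:
  fixes Z :: "nat \<Rightarrow> real"
  assumes "t0 < D"
  shows "(\<Sum>t<D. Z t * (if t = t0 then v else 0)) = Z t0 * v"
proof -
  have "(\<Sum>t<D. Z t * (if t = t0 then v else 0)) = (\<Sum>t<D. if t = t0 then Z t0 * v else 0)"
    by (intro sum.cong) auto
  also have "\<dots> = Z t0 * v" using assms by (simp add: sum.delta)
  finally show ?thesis .
qed

definition Edef :: "nat list \<Rightarrow> nat \<Rightarrow> nat list set \<Rightarrow> nat \<Rightarrow> real" where
  "Edef m k \<gamma> c = (let y = (SOME y. y \<in> \<gamma>) in if c = 0 then Am m k y else Gm m k y)"

definition winD :: "nat \<Rightarrow> nat \<Rightarrow> real" where "winD f t = (if f = t then 1 else 0)"

definition wQD :: "nat list \<Rightarrow> nat \<Rightarrow> nat \<Rightarrow> nat \<Rightarrow> real \<Rightarrow> nat \<Rightarrow> nat \<Rightarrow> real" where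
  "wQD m k d dp lp t h = (if h < k*(k*dp) then
      (if t = d + hA k dp h * dp + hC dp h then lp * Wm m k (hA k dp h) (hB k dp h) else 0)
    else if h = k*(k*dp) then (if t = d + k*dp then 1 else 0) else 0)"
definition bQD :: "nat \<Rightarrow> nat \<Rightarrow> real \<Rightarrow> nat \<Rightarrow> real" where
  "bQD k dp lp h = (if h = k*(k*dp) + 1 then lp else 0)"
definition wKD :: "nat \<Rightarrow> nat \<Rightarrow> nat \<Rightarrow> nat \<Rightarrow> nat \<Rightarrow> real" where
  "wKD k d dp t h = (if h < k*(k*dp) then
      (if t = d + hB k dp h * dp + hC dp h then 1 else 0)
    else if h = k*(k*dp) + 1 then (if t = d + k*dp + 1 then 1 else 0) else 0)"
definition bKD :: "nat \<Rightarrow> nat \<Rightarrow> real \<Rightarrow> nat \<Rightarrow> real" where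
  "bKD k dp lp h = (if h = k*(k*dp) then lp else 0)"

lemma Edef_inv:
  assumes "r \<in> idx n k"
  shows "Edef m k (class_of n k r) 0 = Am m k r" "Edef m k (class_of n k r) (Suc 0) = Gm m k r"
proof -
  have "r \<in> class_of n k r" unfolding class_of_def idx_rel_def
    using assms permutes_id[of "{..<n}"] by (auto intro!: exI[of _ id])
  define y where "y = (SOME y. y \<in> class_of n k r)"
  have "y \<in> class_of n k r" unfolding y_def by (rule someI) fact
  then obtain \<pi> where y: "(SOME y. y \<in> class_of n k r) = y" "y \<in> idx n k" "\<pi> permutes {..<n}" "r = map \<pi> y"
    unfolding y_def[symmetric] by (auto simp: class_of_def idx_rel_def)
  have ly: "length y = k" using y by (simp add: idx_def)
  have pat: "(r!a = r!b) = (y!a = y!b)" if "a < k" "b < k" for a b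
    using rel_pattern[OF y(3) y(4)] that ly by simp
  show "Edef m k (class_of n k r) 0 = Am m k r"
    unfolding Edef_def Let_def y(1) Am_def by (simp, intro sum.cong refl) (simp add: pat)
  show "Edef m k (class_of n k r) (Suc 0) = Gm m k r"
    unfolding Edef_def Let_def y(1) Gm_def by (simp, intro sum.cong refl) (simp add: pat)
qed



lemma score:
  fixes P :: "nat \<Rightarrow> nat \<Rightarrow> real" and d k dp n :: nat and m :: "nat list" and X :: "nat list \<Rightarrow> nat \<Rightarrow> real" and lam :: real
  assumes orth: "\<forall>a<n. \<forall>b<n. (\<Sum>c<dp. P a c * P b c) = (if a = b then 1 else 0)"
    and i: "i \<in> idx n k" and j: "j \<in> idx n k"
  defines "D \<equiv> d + k*dp + 2" and "dH \<equiv> k*(k*dp) + 2"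
    and "Z \<equiv> proj (d + k*dp + 2) (augment n k d dp X P (Edef m k)) winD"
    and "lp \<equiv> lam * sqrt (real (k*(k*dp) + 2))"
  shows "(\<Sum>h<dH. ((\<Sum>t<D. Z i t * wQD m k d dp lp t h) + bQD k dp lp h) *
                 ((\<Sum>t<D. Z j t * wKD k d dp t h) + bKD k dp lp h)) / sqrt (real dH)
         = lam * (Am m k i + Bm m k i j + Gm m k j)"
proof -
  let ?aug = "augment n k d dp X P (Edef m k)"
  let ?N = "k*(k*dp)"
  have Zv: "Z r t = (if t < D then ?aug r t else 0)" for r t
  proof (cases "t < D")
    case True
    then show ?thesis unfolding Z_def proj_def winD_def D_def
      using sum_delta_mult[OF True[unfolded D_def], of "?aug r" 1] by (simp add: eq_commute)
  next
    case False
    then show ?thesis unfolding Z_def proj_def winD_def D_def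
      by (subst if_not_P[OF False[unfolded D_def]]) (rule sum.neutral, auto)
  qed
  have ZP: "Z r (d + a*dp + c) = P (r!a) c" if "a < k" "c < dp" for r a c
  proof -
    have lt: "a*dp + c < k*dp" using lt_mix that .
    then have "d + a*dp + c < D" unfolding D_def by simp
    moreover have "(d + a*dp + c - d) div dp = a" "(d + a*dp + c - d) mod dp = c"
      using dec1[OF that(2)] dec2[OF that(2)] by simp_all
    ultimately show ?thesis unfolding Zv augment_def using lt by simp
  qed
  have ZA: "Z r (d + k*dp) = Am m k r" if "r \<in> idx n k" for r
    unfolding Zv augment_def D_def using Edef_inv[OF that] by simp
  have ZG: "Z r (d + k*dp + 1) = Gm m k r" if "r \<in> idx n k" for r
    unfolding Zv augment_def D_def using Edef_inv[OF that] by simp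
  define Q where "Q h = ((\<Sum>t<D. Z i t * wQD m k d dp lp t h) + bQD k dp lp h)" for h
  define K where "K h = ((\<Sum>t<D. Z j t * wKD k d dp t h) + bKD k dp lp h)" for h
  have QP: "Q h = lp * Wm m k (hA k dp h) (hB k dp h) * P (i!(hA k dp h)) (hC dp h)" if "h < ?N" for h
  proof -
    note hb = hbounds[OF that]
    have lt: "d + hA k dp h * dp + hC dp h < D" using lt_mix[OF hb(1) hb(3)] unfolding D_def by simp
    have "Q h = (\<Sum>t<D. Z i t * (if t = d + hA k dp h * dp + hC dp h then lp * Wm m k (hA k dp h) (hB k dp h) else 0))"
      unfolding Q_def wQD_def bQD_def using that by simp
    also have "\<dots> = Z i (d + hA k dp h * dp + hC dp h) * (lp * Wm m k (hA k dp h) (hB k dp h))"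
      by (rule sum_delta_mult[OF lt])
    finally show ?thesis using ZP[OF hb(1) hb(3)] by simp
  qed
  have KP: "K h = P (j!(hB k dp h)) (hC dp h)" if "h < ?N" for h
  proof -
    note hb = hbounds[OF that]
    have lt: "d + hB k dp h * dp + hC dp h < D" using lt_mix[OF hb(2) hb(3)] unfolding D_def by simp
    have "K h = (\<Sum>t<D. Z j t * (if t = d + hB k dp h * dp + hC dp h then 1 else 0))"
      unfolding K_def wKD_def bKD_def using that by simp
    also have "\<dots> = Z j (d + hB k dp h * dp + hC dp h) * 1"
      by (rule sum_delta_mult[OF lt])
    finally show ?thesis using ZP[OF hb(2) hb(3)] by simp
  qed
  have QA: "Q ?N = Am m k i"
  proof -
    have "Q ?N = (\<Sum>t<D. Z i t * (if t = d + k*dp then 1 else 0))"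
      unfolding Q_def wQD_def bQD_def by simp
    also have "\<dots> = Z i (d + k*dp) * 1" by (rule sum_delta_mult) (simp add: D_def)
    finally show ?thesis using ZA[OF i] by simp
  qed
  have KA: "K ?N = lp" unfolding K_def wKD_def bKD_def by simp
  have QG: "Q (?N+1) = lp" unfolding Q_def wQD_def bQD_def by simp
  have KG: "K (?N+1) = Gm m k j"
  proof -
    have "K (?N+1) = (\<Sum>t<D. Z j t * (if t = d + k*dp + 1 then 1 else 0))"
      unfolding K_def wKD_def bKD_def by simp
    also have "\<dots> = Z j (d + k*dp + 1) * 1" by (rule sum_delta_mult) (simp add: D_def)
    finally show ?thesis using ZG[OF j] by simp
  qed
  have li: "length i = k" "set i \<subseteq> {..<n}" and lj: "length j = k" "set j \<subseteq> {..<n}"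
    using i j by (auto simp: idx_def)
  have ipj: "(\<Sum>c<dp. P (i!a) c * P (j!b) c) = ind (i!a = j!b)" if "a < k" "b < k" for a b
  proof -
    have "i!a \<in> set i" "j!b \<in> set j" using li lj that by simp_all
    then have "i!a < n" "j!b < n" using li(2) lj(2) by auto
    then show ?thesis using orth by (simp add: ind_def)
  qed
  have "(\<Sum>h<?N. Q h * K h) = (\<Sum>a<k. \<Sum>r<k*dp. Q (a*(k*dp) + r) * K (a*(k*dp) + r))"
    by (rule sum_split_mult)
  also have "\<dots> = (\<Sum>a<k. \<Sum>b<k. \<Sum>c<dp. Q (a*(k*dp) + (b*dp+c)) * K (a*(k*dp) + (b*dp+c)))"
    by (intro sum.cong refl sum_split_mult)
  also have "\<dots> = (\<Sum>a<k. \<Sum>b<k. \<Sum>c<dp. lp * Wm m k a b * (P (i!a) c * P (j!b) c))"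
  proof (intro sum.cong refl)
    fix a b c assume "a \<in> {..<k}" "b \<in> {..<k}" "c \<in> {..<dp}"
    then have ab: "a < k" "b < k" "c < dp" by auto
    have "a*(k*dp) + (b*dp+c) < ?N"
    proof -
      have "a*(k*dp) + (b*dp+c) < a*(k*dp) + k*dp" using lt_mix[OF ab(2,3)] by simp
      also have "\<dots> = Suc a * (k*dp)" by simp
      also have "\<dots> \<le> ?N" using ab(1) by (intro mult_le_mono1) simp
      finally show ?thesis .
    qed
    then show "Q (a*(k*dp) + (b*dp+c)) * K (a*(k*dp) + (b*dp+c)) = lp * Wm m k a b * (P (i!a) c * P (j!b) c)"
      using QP KP dec_all[OF ab(2,3)] by simp
  qed
  also have "\<dots> = lp * Bm m k i j"
    unfolding Bm_def sum_distrib_left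
    by (intro sum.cong refl) (simp add: sum_distrib_left[symmetric] ipj mult.assoc)
  finally have main: "(\<Sum>h<?N. Q h * K h) = lp * Bm m k i j" .
  have "dH = Suc (Suc ?N)" unfolding dH_def by simp
  then have "(\<Sum>h<dH. Q h * K h) = (\<Sum>h<?N. Q h * K h) + Q ?N * K ?N + Q (?N+1) * K (?N+1)"
    by simp
  also have "\<dots> = lp * (Am m k i + Bm m k i j + Gm m k j)"
    using main QA KA QG KG by (simp add: algebra_simps)
  finally have "(\<Sum>h<dH. Q h * K h) = lp * (Am m k i + Bm m k i j + Gm m k j)" .
  moreover have "dH > 0" unfolding dH_def by simp
  then have "sqrt (real dH) > 0" by simp
  moreover have lpv: "lp = lam * sqrt (real dH)" unfolding lp_def dH_def by simp
  ultimately have "(\<Sum>h<dH. Q h * K h) / sqrt (real dH) = lam * (Am m k i + Bm m k i j + Gm m k j)"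
    by simp
  then show ?thesis unfolding Q_def K_def .
qed



theorem lemma1:
  fixes n k d dp :: nat and P :: "nat \<Rightarrow> nat \<Rightarrow> real" and \<mu> :: "nat list set"
  assumes "n > 0" "k > 0" "d > 0" "dp > 0" "dp \<ge> n"
    and "\<forall>a<n. \<forall>b<n. (\<Sum>c<dp. P a c * P b c) = (if a = b then 1 else 0)"
    and "\<mu> \<in> eq_classes n (2 * k)"
  shows "\<forall>\<delta>>0. \<exists>(de::nat) (E::nat list set \<Rightarrow> nat \<Rightarrow> real) (dT::nat) (win::nat \<Rightarrow> nat \<Rightarrow> real)
            (dH::nat) (wQ::nat \<Rightarrow> nat \<Rightarrow> real) (wK::nat \<Rightarrow> nat \<Rightarrow> real) (bQ::nat \<Rightarrow> real) (bK::nat \<Rightarrow> real).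
           de > 0 \<and> dT > 0 \<and> dH > 0 \<and>
           (\<forall>X::nat list \<Rightarrow> nat \<Rightarrow> real. \<forall>i\<in>idx n k. \<forall>j\<in>idx n k.
              (\<Sum>j'\<in>idx n k. basis \<mu> (i @ j')) > 0 \<longrightarrow>
              \<bar>attn_coeff n k dT dH (proj (d + k * dp + de) (augment n k d dp X P E) win) wQ wK bQ bK i j
               - basis \<mu> (i @ j) / (\<Sum>j'\<in>idx n k. basis \<mu> (i @ j'))\<bar> < \<delta>)"
proof (intro allI impI)
  fix \<delta> :: real assume \<delta>: "\<delta> > 0"
  obtain m where m: "m \<in> idx n (2*k)" and mu: "\<mu> = idx_rel n (2*k) `` {m}"
    using mu_rep[OF assms(7)] by blast
  have lm: "length m = 2*k" using m by (simp add: idx_def)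
  have fin: "finite (idx n k)"
    unfolding idx_def using finite_lists_length_eq[of "{..<n}" k] by (simp add: conj_commute)
  have "replicate k 0 \<in> idx n k" using assms(1) by (auto simp: idx_def)
  then have Kc1: "real (card (idx n k)) \<ge> 1" using fin
    by (metis One_nat_def Suc_leI card_gt_0_iff empty_iff of_nat_1 of_nat_mono)
  define Kc where "Kc = real (card (idx n k))"
  define lam where "lam = \<bar>ln (Kc / \<delta>)\<bar> + 1"
  have lam0: "lam \<ge> 0" unfolding lam_def by simp
  have small: "Kc * exp (- lam) < \<delta>"
  proof -
    have pos: "Kc / \<delta> > 0" using Kc1 \<delta> Kc_def by simp
    have "exp (- lam) = exp (- \<bar>ln (Kc / \<delta>)\<bar>) * exp (-1)" unfolding lam_def
      by (simp add: exp_add[symmetric])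
    also have "\<dots> \<le> exp (- ln (Kc / \<delta>)) * exp (-1)" by simp
    also have "\<dots> = \<delta> / Kc * exp (-1)" using pos by (simp add: exp_minus exp_ln)
    also have "\<dots> < \<delta> / Kc * 1"
    proof (rule mult_strict_left_mono)
      show "exp (-1::real) < 1" by simp
      show "0 < \<delta> / Kc" using \<delta> Kc1 Kc_def by simp
    qed
    also have "\<dots> = \<delta> / Kc" by simp
    finally show ?thesis using Kc1 Kc_def by (simp add: field_simps)
  qed
  define D where "D = d + k*dp + 2"
  define dH where "dH = k*(k*dp) + 2"
  define lp where "lp = lam * sqrt (real (k*(k*dp) + 2))"
  show "\<exists>(de::nat) (E::nat list set \<Rightarrow> nat \<Rightarrow> real) (dT::nat) (win::nat \<Rightarrow> nat \<Rightarrow> real)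
            (dH::nat) (wQ::nat \<Rightarrow> nat \<Rightarrow> real) (wK::nat \<Rightarrow> nat \<Rightarrow> real) (bQ::nat \<Rightarrow> real) (bK::nat \<Rightarrow> real).
           de > 0 \<and> dT > 0 \<and> dH > 0 \<and>
           (\<forall>X::nat list \<Rightarrow> nat \<Rightarrow> real. \<forall>i\<in>idx n k. \<forall>j\<in>idx n k.
              (\<Sum>j'\<in>idx n k. basis \<mu> (i @ j')) > 0 \<longrightarrow>
              \<bar>attn_coeff n k dT dH (proj (d + k * dp + de) (augment n k d dp X P E) win) wQ wK bQ bK i j
               - basis \<mu> (i @ j) / (\<Sum>j'\<in>idx n k. basis \<mu> (i @ j'))\<bar> < \<delta>)"
  proof (intro exI conjI allI ballI impI)
    show "(2::nat) > 0" by simp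
    show "D > 0" unfolding D_def by simp
    show "dH > 0" unfolding dH_def by simp
  next
    fix X :: "nat list \<Rightarrow> nat \<Rightarrow> real" and i j
    assume i: "i \<in> idx n k" and j: "j \<in> idx n k"
      and pos: "(\<Sum>j'\<in>idx n k. basis \<mu> (i @ j')) > 0"
    let ?Z = "proj (d + k*dp + 2) (augment n k d dp X P (Edef m k)) winD"
    define good where "good = {j'\<in>idx n k. i @ j' \<in> \<mu>}"
    define sc where "sc j' = lam * Tp m (2*k) (i @ j')" for j'
    have li: "length i = k" using i by (simp add: idx_def)
    have app: "i @ j' \<in> idx n (2*k)" if "j' \<in> idx n k" for j'
      using i that by (auto simp: idx_def)
    have S: "(\<Sum>h<dH. ((\<Sum>t<D. ?Z i t * wQD m k d dp lp t h) + bQD k dp lp h) *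
                 ((\<Sum>t<D. ?Z j' t * wKD k d dp t h) + bKD k dp lp h)) / sqrt (real dH) = sc j'"
      if "j' \<in> idx n k" for j'
    proof -
      have "length j' = k" using that by (simp add: idx_def)
      then show ?thesis
        using score[OF assms(6) i that, where d=d and m=m and X=X and lam=lam] Tp_split[OF li, of j' m]
        unfolding D_def dH_def lp_def sc_def by simp
    qed
    have att: "attn_coeff n k D dH ?Z (wQD m k d dp lp) (wKD k d dp) (bQD k dp lp) (bKD k dp lp) i j
        = exp (sc j) / (\<Sum>j'\<in>idx n k. exp (sc j'))"
      unfolding attn_coeff_def Let_def using S[OF j] S by simp
    have bsum: "(\<Sum>j'\<in>idx n k. basis \<mu> (i @ j')) = real (card good)"
      unfolding basis_def good_def using fin by (simp add: sum.If_cases Int_def)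
    have bj: "basis \<mu> (i @ j) = (if j \<in> good then 1 else 0)"
      unfolding basis_def good_def using j by simp
    have gne: "good \<noteq> {}" using pos bsum by auto
    have "\<bar>exp (sc j) / (\<Sum>j'\<in>idx n k. exp (sc j')) - (if j \<in> good then 1 else 0) / real (card good)\<bar> < \<delta>"
    proof (rule softmax_approx[OF fin _ gne, where lam=lam and cz="lam * Tp m (2*k) m"])
      show "good \<subseteq> idx n k" unfolding good_def by auto
      show "real (card (idx n k)) * exp (- lam) < \<delta>" using small Kc_def by simp
      show "sc j' = lam * Tp m (2*k) m" if "j' \<in> good" for j'
        using that Tp_mu(1)[OF m app] unfolding good_def sc_def mu by auto
      show "sc j' \<le> lam * Tp m (2*k) m - lam" if "j' \<in> idx n k - good" for j'
      proof -
        have "Tp m (2*k) (i @ j') \<le> Tp m (2*k) m - 1"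
          using that Tp_mu(2)[OF m app] unfolding good_def mu by auto
        then have "lam * Tp m (2*k) (i @ j') \<le> lam * (Tp m (2*k) m - 1)"
          using lam0 by (rule mult_left_mono)
        then show ?thesis unfolding sc_def by (simp add: algebra_simps)
      qed
    qed (rule j)
    then show "\<bar>attn_coeff n k D dH (proj (d + k * dp + 2) (augment n k d dp X P (Edef m k)) winD)
          (wQD m k d dp lp) (wKD k d dp) (bQD k dp lp) (bKD k dp lp) i j
        - basis \<mu> (i @ j) / (\<Sum>j'\<in>idx n k. basis \<mu> (i @ j'))\<bar> < \<delta>"
      unfolding att bsum bj .
  qed
qed


end
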